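(* Let $G$ be a compact, connected Lie group whose Lie algebra is simple, and let $(\pi,V)$ be a nontrivial irreducible representation of $G$ on a finite-dimensional real vector space $V$. If $v\in V$ is nonzero, then there exist points $g_1,\ldots,g_n\in G$ such that $0$ lies in the interior of the convex hull of $\pi(g_1)v,\pi(g_2)v,\ldots,\pi(g_n)v$. *)

theory Defs
  imports "HOL-Analysis.Analysis"
begin

definition op_exp :: "('w::euclidean_space \<Rightarrow>\<^sub>L 'w) \<Rightarrow> ('w \<Rightarrow>\<^sub>L 'w)" where
  "op_exp X = (\<Sum>k. (1 / fact k) *\<^sub>R (((\<lambda>Y. X o\<^sub>L Y) ^^ k) id_blinfun))"

definition op_bracket :: "('w::euclidean_space \<Rightarrow>\<^sub>L 'w) \<Rightarrow> ('w \<Rightarrow>\<^sub>L 'w) \<Rightarrow> ('w \<Rightarrow>\<^sub>L 'w)" where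
  "op_bracket X Y = X o\<^sub>L Y - Y o\<^sub>L X"

definition compact_connected_linear_group :: "('w::euclidean_space \<Rightarrow>\<^sub>L 'w) set \<Rightarrow> bool" where
  "compact_connected_linear_group G \<longleftrightarrow>
     compact G \<and> connected G \<and> id_blinfun \<in> G \<and>
     (\<forall>g\<in>G. \<forall>h\<in>G. g o\<^sub>L h \<in> G) \<and>
     (\<forall>g\<in>G. \<exists>h\<in>G. g o\<^sub>L h = id_blinfun \<and> h o\<^sub>L g = id_blinfun)"

definition lie_algebra_of :: "('w::euclidean_space \<Rightarrow>\<^sub>L 'w) set \<Rightarrow> ('w \<Rightarrow>\<^sub>L 'w) set" where
  "lie_algebra_of G = {X. \<forall>t::real. op_exp (t *\<^sub>R X) \<in> G}"

definition simple_lie_algebra :: "('w::euclidean_space \<Rightarrow>\<^sub>L 'w) set \<Rightarrow> bool" where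
  "simple_lie_algebra L \<longleftrightarrow>
     subspace L \<and> (\<forall>X\<in>L. \<forall>Y\<in>L. op_bracket X Y \<in> L) \<and>
     (\<exists>X\<in>L. \<exists>Y\<in>L. op_bracket X Y \<noteq> 0) \<and>
     (\<forall>I. subspace I \<and> I \<subseteq> L \<and> (\<forall>X\<in>L. \<forall>Y\<in>I. op_bracket X Y \<in> I) \<longrightarrow> I = {0} \<or> I = L)"

definition representation ::
  "('w::euclidean_space \<Rightarrow>\<^sub>L 'w) set \<Rightarrow> (('w \<Rightarrow>\<^sub>L 'w) \<Rightarrow> ('v::euclidean_space \<Rightarrow>\<^sub>L 'v)) \<Rightarrow> bool" where
  "representation G \<pi> \<longleftrightarrow> continuous_on G \<pi> \<and> \<pi> id_blinfun = id_blinfun \<and>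
     (\<forall>g\<in>G. \<forall>h\<in>G. \<pi> (g o\<^sub>L h) = \<pi> g o\<^sub>L \<pi> h)"

definition irreducible_rep ::
  "('w::euclidean_space \<Rightarrow>\<^sub>L 'w) set \<Rightarrow> (('w \<Rightarrow>\<^sub>L 'w) \<Rightarrow> ('v::euclidean_space \<Rightarrow>\<^sub>L 'v)) \<Rightarrow> bool" where
  "irreducible_rep G \<pi> \<longleftrightarrow>
     (\<forall>U::'v set. subspace U \<and> (\<forall>g\<in>G. \<forall>u\<in>U. \<pi> g u \<in> U) \<longrightarrow> U = {0} \<or> U = UNIV)"

definition nontrivial_rep ::
  "('w::euclidean_space \<Rightarrow>\<^sub>L 'w) set \<Rightarrow> (('w \<Rightarrow>\<^sub>L 'w) \<Rightarrow> ('v::euclidean_space \<Rightarrow>\<^sub>L 'v)) \<Rightarrow> bool" where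
  "nontrivial_rep G \<pi> \<longleftrightarrow> (\<exists>g\<in>G. \<pi> g \<noteq> id_blinfun)"

end

theory Submission
  imports Defs
begin

lemma par: fixes a b :: "'a::real_inner"
  shows "(norm ((1/2) *\<^sub>R (a + b)))\<^sup>2 = ((norm a)\<^sup>2 + (norm b)\<^sup>2)/2 - (norm (a - b))\<^sup>2/4"
  by (simp add: power2_norm_eq_inner inner_add_left inner_add_right inner_diff_left inner_diff_right inner_commute field_simps)

lemma fixpt:
  fixes G :: "('w::euclidean_space \<Rightarrow>\<^sub>L 'w) set"
    and \<pi> :: "('w \<Rightarrow>\<^sub>L 'w) \<Rightarrow> ('v::euclidean_space \<Rightarrow>\<^sub>L 'v)"
  assumes G: "compact_connected_linear_group G" and R: "representation G \<pi>"
    and irr: "irreducible_rep G \<pi>" and nt: "nontrivial_rep G \<pi>"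
    and C: "compact C" "convex C" "C \<noteq> {}" "\<And>g x. g\<in>G \<Longrightarrow> x\<in>C \<Longrightarrow> \<pi> g x \<in> C"
  shows "0 \<in> C"
proof -
  have cG: "compact G" and idG: "id_blinfun \<in> G" and mul: "\<And>g h. g\<in>G \<Longrightarrow> h\<in>G \<Longrightarrow> g o\<^sub>L h \<in> G"
    and inv: "\<And>g. g\<in>G \<Longrightarrow> \<exists>h\<in>G. g o\<^sub>L h = id_blinfun \<and> h o\<^sub>L g = id_blinfun"
    using G unfolding compact_connected_linear_group_def by auto
  have cont: "continuous_on G \<pi>" and pid: "\<pi> id_blinfun = id_blinfun"
    and hom: "\<And>g h. g\<in>G \<Longrightarrow> h\<in>G \<Longrightarrow> \<pi> (g o\<^sub>L h) = \<pi> g o\<^sub>L \<pi> h"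
    using R unfolding representation_def by auto
  have Gne: "G \<noteq> {}" using idG by auto
  have injp: "x = 0" if gG: "g \<in> G" and "\<pi> g x = 0" for g x
  proof -
    obtain h where h: "h \<in> G" "h o\<^sub>L g = id_blinfun" using inv[OF gG] by auto
    have "x = \<pi> (h o\<^sub>L g) x" using h pid by simp
    also have "\<dots> = \<pi> h (\<pi> g x)" using hom[OF h(1) gG] by simp
    finally show ?thesis using that(2) by simp
  qed
  have "bounded (\<pi> ` G)" using compact_continuous_image[OF cont cG] compact_imp_bounded by blast
  then obtain M where M: "\<And>g. g \<in> G \<Longrightarrow> norm (\<pi> g) \<le> M" unfolding bounded_iff by blast
  have M0: "0 \<le> M" using M[OF idG] norm_ge_zero[of "\<pi> id_blinfun"] by linarith
  have bnd: "norm (\<pi> g x) \<le> M * norm x" if "g \<in> G" for g x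
    using norm_blinfun[of "\<pi> g" x] M[OF that] mult_right_mono[OF M[OF that], of "norm x"] by auto
  define N where "N x = (SUP g\<in>G. norm (\<pi> g x))" for x
  have bdd: "bdd_above ((\<lambda>g. norm (\<pi> g x)) ` G)" for x
    using bnd by (intro bdd_aboveI2) auto
  have le: "norm (\<pi> g x) \<le> N x" if "g \<in> G" for g x
    unfolding N_def using bdd that by (rule cSUP_upper2) auto
  have N0: "0 \<le> N x" for x using le[OF idG, of x] norm_ge_zero[of "\<pi> id_blinfun x"] by linarith
  have att: "\<exists>g\<in>G. N x = norm (\<pi> g x)" for x
  proof -
    have "continuous_on G (\<lambda>g. norm (\<pi> g x))" by (intro continuous_intros cont)
    then obtain g0 where g0: "g0 \<in> G" "\<And>g. g\<in>G \<Longrightarrow> norm (\<pi> g x) \<le> norm (\<pi> g0 x)"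
      using continuous_attains_sup[OF cG Gne] by blast
    have "N x \<le> norm (\<pi> g0 x)" unfolding N_def using Gne g0 by (intro cSUP_least) auto
    then show ?thesis using le[OF g0(1), of x] g0(1) by (intro bexI[of _ g0]) auto
  qed
  have lip: "N x \<le> N y + M * norm (x - y)" for x y
    unfolding N_def[of x]
  proof (rule cSUP_least[OF Gne])
    fix g assume g: "g \<in> G"
    have "norm (\<pi> g x) \<le> norm (\<pi> g y) + norm (\<pi> g (x - y))"
      using norm_triangle_ineq[of "\<pi> g y" "\<pi> g (x - y)"] by (simp add: blinfun.diff_right)
    also have "\<dots> \<le> N y + M * norm (x - y)" using le[OF g] bnd[OF g] by (intro add_mono) auto
    finally show "norm (\<pi> g x) \<le> N y + M * norm (x - y)" .
  qed
  have "lipschitz_on M C N"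
  proof (rule lipschitz_onI[OF _ M0])
    fix x y assume "x \<in> C" "y \<in> C"
    show "dist (N x) (N y) \<le> M * dist x y"
      using lip[of x y] lip[of y x] norm_minus_commute[of x y] by (simp add: dist_real_def dist_norm abs_le_iff)
  qed
  then have contN: "continuous_on C N" by (rule lipschitz_on_continuous_on)
  obtain m where m: "m \<in> C" "\<And>y. y \<in> C \<Longrightarrow> N m \<le> N y"
    using continuous_attains_inf[OF C(1) C(3) contN] by blast
  have inv_le: "N (\<pi> h x) \<le> N x" if "h \<in> G" for h x
    unfolding N_def[of "\<pi> h x"]
  proof (rule cSUP_least[OF Gne])
    fix g assume g: "g \<in> G"
    have "\<pi> g (\<pi> h x) = \<pi> (g o\<^sub>L h) x" using hom[OF g that] by simp
    then show "norm (\<pi> g (\<pi> h x)) \<le> N x" using le[OF mul[OF g that]] by simp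
  qed
  have invN: "N (\<pi> h x) = N x" if hG: "h \<in> G" for h x
  proof -
    obtain h' where h': "h' \<in> G" "h' o\<^sub>L h = id_blinfun" using inv[OF hG] by auto
    have "x = \<pi> h' (\<pi> h x)" using hom[OF h'(1) hG] h' pid by (metis blinfun_apply_blinfun_compose blinfun_apply_id_blinfun)
    then have "N x \<le> N (\<pi> h x)" using inv_le[OF h'(1), of "\<pi> h x"] by simp
    then show ?thesis using inv_le[OF hG, of x] by simp
  qed
  have uniq: "x = m" if x: "x \<in> C" "N x \<le> N m" for x
  proof (rule ccontr)
    assume ne: "x \<noteq> m"
    define z where "z = (1/2) *\<^sub>R (x + m)"
    have zC: "z \<in> C" unfolding z_def using convexD[OF C(2) x(1) m(1), of "1/2" "1/2"]
      by (simp add: scaleR_add_right)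
    obtain g where g: "g \<in> G" "N z = norm (\<pi> g z)" using att by blast
    have "\<pi> g (x - m) \<noteq> 0" using injp[OF g(1)] ne by force
    then have pos: "0 < (norm (\<pi> g x - \<pi> g m))\<^sup>2" by (simp add: blinfun.diff_right)
    have "(N z)\<^sup>2 = (norm ((1/2) *\<^sub>R (\<pi> g x + \<pi> g m)))\<^sup>2"
    proof -
      have "\<pi> g z = (1/2) *\<^sub>R (\<pi> g x + \<pi> g m)"
        by (simp add: z_def blinfun.add_right blinfun.scaleR_right)
      then show ?thesis using g(2) by (simp only:)
    qed
    also have "\<dots> = ((norm (\<pi> g x))\<^sup>2 + (norm (\<pi> g m))\<^sup>2)/2 - (norm (\<pi> g x - \<pi> g m))\<^sup>2/4"
      by (rule par)
    also have "\<dots> < ((norm (\<pi> g x))\<^sup>2 + (norm (\<pi> g m))\<^sup>2)/2" using pos by linarith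
    also have "\<dots> \<le> ((N m)\<^sup>2 + (N m)\<^sup>2)/2"
      using le[OF g(1), of x] le[OF g(1), of m] x(2)
      by (intro divide_right_mono add_mono power_mono) auto
    finally have "(N z)\<^sup>2 < (N m)\<^sup>2" by simp
    then have "N z < N m" using N0[of z] N0[of m] by (simp add: power_less_imp_less_base)
    with m(2)[OF zC] show False by simp
  qed
  have fixm: "\<pi> h m = m" if "h \<in> G" for h
    using uniq[OF C(4)[OF that m(1)]] invN[OF that] by simp
  define F where "F = {x. \<forall>g\<in>G. \<pi> g x = x}"
  have "subspace F" unfolding F_def subspace_def
    by (auto simp: blinfun.zero_right blinfun.add_right blinfun.scaleR_right)
  moreover have "\<forall>g\<in>G. \<forall>u\<in>F. \<pi> g u \<in> F" unfolding F_def by auto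
  ultimately have "F = {0} \<or> F = UNIV" using irr unfolding irreducible_rep_def by blast
  moreover have "F \<noteq> UNIV"
  proof
    assume "F = UNIV"
    then have "\<forall>g\<in>G. \<forall>x. \<pi> g x = x" unfolding F_def by (metis (mono_tags, lifting) UNIV_I mem_Collect_eq)
    then have "\<forall>g\<in>G. \<pi> g = id_blinfun" by (auto intro!: blinfun_eqI)
    then show False using nt unfolding nontrivial_rep_def by auto
  qed
  moreover have "m \<in> F" unfolding F_def using fixm by auto
  ultimately show ?thesis using m(1) by auto
qed

lemma lin: "linear (blinfun_apply A)"
  by (rule bounded_linear.linear[OF blinfun.bounded_linear_right])

lemma fin_hull: fixes x :: "'a::euclidean_space"
  assumes "x \<in> convex hull Orb" shows "\<exists>T. finite T \<and> T \<subseteq> Orb \<and> x \<in> convex hull T"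
proof -
  obtain T u where "finite T" "T \<subseteq> Orb" "\<forall>x\<in>T. 0 \<le> u x" "sum u T = 1" "(\<Sum>v\<in>T. u v *\<^sub>R v) = x"
    using assms unfolding convex_hull_caratheodory by blast
  then show ?thesis using convex_hull_finite[of T] by blast
qed

theorem theorem2p2:
  fixes G :: "('w::euclidean_space \<Rightarrow>\<^sub>L 'w) set"
    and \<pi> :: "('w \<Rightarrow>\<^sub>L 'w) \<Rightarrow> ('v::euclidean_space \<Rightarrow>\<^sub>L 'v)"
    and v :: 'v
  assumes "compact_connected_linear_group G"
    and "simple_lie_algebra (lie_algebra_of G)"
    and "representation G \<pi>"
    and "irreducible_rep G \<pi>"
    and "nontrivial_rep G \<pi>"
    and "v \<noteq> 0"
  shows "\<exists>S. finite S \<and> S \<subseteq> G \<and> 0 \<in> interior (convex hull ((\<lambda>g. \<pi> g v) ` S))"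
proof -
  note G = assms(1) and R = assms(3) and irr = assms(4) and nt = assms(5)
  have cG: "compact G" and idG: "id_blinfun \<in> G" and mul: "\<And>g h. g\<in>G \<Longrightarrow> h\<in>G \<Longrightarrow> g o\<^sub>L h \<in> G"
    and inv: "\<And>g. g\<in>G \<Longrightarrow> \<exists>h\<in>G. g o\<^sub>L h = id_blinfun \<and> h o\<^sub>L g = id_blinfun"
    using G unfolding compact_connected_linear_group_def by auto
  have cont: "continuous_on G \<pi>" and pid: "\<pi> id_blinfun = id_blinfun"
    and hom: "\<And>g h. g\<in>G \<Longrightarrow> h\<in>G \<Longrightarrow> \<pi> (g o\<^sub>L h) = \<pi> g o\<^sub>L \<pi> h"
    using R unfolding representation_def by auto
  have injp: "inj (blinfun_apply (\<pi> g))" if gG: "g \<in> G" for g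
  proof (rule injI)
    fix x y assume e: "\<pi> g x = \<pi> g y"
    obtain h where h: "h \<in> G" "h o\<^sub>L g = id_blinfun" using inv[OF gG] by auto
    have "\<And>z. z = \<pi> h (\<pi> g z)" using hom[OF h(1) gG] h pid
      by (metis blinfun_apply_blinfun_compose blinfun_apply_id_blinfun)
    then show "x = y" using e by metis
  qed
  have orbit_inv: "\<pi> h ` (\<lambda>g. \<pi> g w) ` G \<subseteq> (\<lambda>g. \<pi> g w) ` G" if hG: "h \<in> G" for h w
  proof
    fix y assume "y \<in> \<pi> h ` (\<lambda>g. \<pi> g w) ` G"
    then obtain g where g: "g \<in> G" "y = \<pi> h (\<pi> g w)" by auto
    then have "y = \<pi> (h o\<^sub>L g) w" using hom[OF hG g(1)] by simp
    then show "y \<in> (\<lambda>g. \<pi> g w) ` G" using mul[OF hG g(1)] by blast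
  qed
  have fixhull: "0 \<in> convex hull ((\<lambda>g. \<pi> g w) ` G)" for w
  proof (rule fixpt[OF G R irr nt])
    have "continuous_on G (\<lambda>g. \<pi> g w)" by (intro continuous_intros cont)
    then show "compact (convex hull ((\<lambda>g. \<pi> g w) ` G))"
      by (intro compact_convex_hull compact_continuous_image cG)
    show "convex (convex hull ((\<lambda>g. \<pi> g w) ` G))" by simp
    show "convex hull ((\<lambda>g. \<pi> g w) ` G) \<noteq> {}" using idG by auto
    fix h x assume hG: "h \<in> G" and x: "x \<in> convex hull ((\<lambda>g. \<pi> g w) ` G)"
    have "\<pi> h x \<in> \<pi> h ` (convex hull ((\<lambda>g. \<pi> g w) ` G))" using x by blast
    also have "\<dots> = convex hull (\<pi> h ` (\<lambda>g. \<pi> g w) ` G)" by (rule convex_hull_linear_image[OF lin])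
    also have "\<dots> \<subseteq> convex hull ((\<lambda>g. \<pi> g w) ` G)" by (rule hull_mono[OF orbit_inv[OF hG]])
    finally show "\<pi> h x \<in> convex hull ((\<lambda>g. \<pi> g w) ` G)" .
  qed
  define Orb where "Orb = (\<lambda>g. \<pi> g v) ` G"
  obtain T0 where T0: "finite T0" "T0 \<subseteq> Orb" "0 \<in> convex hull T0"
    using fin_hull[OF fixhull[of v]] unfolding Orb_def by blast
  obtain F0 where F0: "F0 \<subseteq> G" "finite F0" "T0 = (\<lambda>g. \<pi> g v) ` F0"
    using finite_subset_image[OF T0(1) T0(2)[unfolded Orb_def]] by blast
  have "subspace (span Orb)" by simp
  moreover have "\<forall>g\<in>G. \<forall>u\<in>span Orb. \<pi> g u \<in> span Orb"
  proof (intro ballI)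
    fix g u assume g: "g \<in> G" and u: "u \<in> span Orb"
    have "\<pi> g u \<in> \<pi> g ` span Orb" using u by blast
    also have "\<dots> = span (\<pi> g ` Orb)" using span_linear_image[OF lin] by metis
    also have "\<dots> \<subseteq> span Orb" using orbit_inv[OF g] unfolding Orb_def by (intro span_mono)
    finally show "\<pi> g u \<in> span Orb" .
  qed
  ultimately have "span Orb = {0} \<or> span Orb = UNIV" using irr unfolding irreducible_rep_def by blast
  moreover have "v \<in> span Orb" using idG pid unfolding Orb_def by (intro span_base) force
  ultimately have spanO: "span Orb = UNIV" using assms(6) by auto
  obtain B where B: "B \<subseteq> Orb" "independent B" "Orb \<subseteq> span B" by (rule maximal_independent_subset)
  have "finite B" using B(2) by (rule finiteI_independent)
  then obtain B1 where B1: "B1 \<subseteq> G" "finite B1" "B = (\<lambda>g. \<pi> g v) ` B1"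
    using finite_subset_image[OF _ B(1)[unfolded Orb_def]] by blast
  define S1 where "S1 = F0 \<union> B1"
  define F where "F = (\<lambda>g. \<pi> g v) ` S1"
  have S1: "finite S1" "S1 \<subseteq> G" using F0 B1 unfolding S1_def by auto
  have "0 \<in> convex hull F" using T0(3) hull_mono[of T0 F] F0(3) unfolding F_def S1_def by auto
  then have "0 \<in> affine hull F" using convex_hull_subset_affine_hull by blast
  then have "affine hull F = span F" by (rule affine_hull_span_0)
  moreover have "span F = UNIV"
  proof -
    have "B \<subseteq> F" unfolding F_def S1_def B1(3) by auto
    then have "span B \<subseteq> span F" by (rule span_mono)
    moreover have "span Orb \<subseteq> span B" using B(3) by (metis span_minimal subspace_span)
    ultimately show ?thesis using spanO by auto
  qed
  ultimately have "affine hull (convex hull F) = UNIV" by simp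
  then have "rel_interior (convex hull F) = interior (convex hull F)" by (rule rel_interior_interior)
  moreover have "convex hull F \<noteq> {}" using \<open>0 \<in> convex hull F\<close> by auto
  ultimately have "interior (convex hull F) \<noteq> {}"
    using rel_interior_eq_empty[of "convex hull F"] by simp
  then obtain p where p: "p \<in> interior (convex hull F)" by blast
  obtain T where T: "finite T" "T \<subseteq> (\<lambda>g. \<pi> g p) ` G" "0 \<in> convex hull T"
    using fin_hull[OF fixhull[of p]] by blast
  obtain H where H: "H \<subseteq> G" "finite H" "T = (\<lambda>g. \<pi> g p) ` H"
    using finite_subset_image[OF T(1) T(2)] by blast
  define S where "S = (\<lambda>(h,g). h o\<^sub>L g) ` (H \<times> S1)"
  have finS: "finite S" unfolding S_def using H(2) S1(1) by simp
  have SG: "S \<subseteq> G" unfolding S_def using H(1) S1(2) mul by auto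
  have "T \<subseteq> interior (convex hull ((\<lambda>g. \<pi> g v) ` S))"
  proof
    fix t assume "t \<in> T"
    then obtain h where h: "h \<in> H" "t = \<pi> h p" using H(3) by auto
    have hG: "h \<in> G" using h(1) H(1) by auto
    have "t \<in> \<pi> h ` interior (convex hull F)" using h(2) p by blast
    also have "\<dots> = interior (\<pi> h ` (convex hull F))"
      by (rule interior_injective_linear_image[OF lin injp[OF hG], symmetric])
    also have "\<dots> = interior (convex hull (\<pi> h ` F))" by (simp add: convex_hull_linear_image[OF lin])
    also have "\<dots> \<subseteq> interior (convex hull ((\<lambda>g. \<pi> g v) ` S))"
    proof (intro interior_mono hull_mono subsetI)
      fix y assume "y \<in> \<pi> h ` F"
      then obtain g where g: "g \<in> S1" "y = \<pi> h (\<pi> g v)" unfolding F_def by auto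
      have gG: "g \<in> G" using g(1) S1(2) by auto
      have "y = \<pi> (h o\<^sub>L g) v" using g(2) hom[OF hG gG] by simp
      moreover have "h o\<^sub>L g \<in> S" unfolding S_def using h(1) g(1) by force
      ultimately show "y \<in> (\<lambda>g. \<pi> g v) ` S" by blast
    qed
    finally show "t \<in> interior (convex hull ((\<lambda>g. \<pi> g v) ` S))" .
  qed
  then have "convex hull T \<subseteq> interior (convex hull ((\<lambda>g. \<pi> g v) ` S))"
    by (intro hull_minimal) auto
  then show ?thesis using T(3) finS SG by blast
qed

end
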